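(* Let $\nu\ge1$, $\rho>0$, fix $1\le n\le \nu$ and fix $\lambda_m>0$ for all $m\ne n$. For $\lambda_n>0$, let $X=(X_1,\dots,X_\nu)^T$ have the truncated normal density $$f(x)=k\prod_{m=1}^{\nu}\lambda_m^{-1/2}\phi(\lambda_m^{-1/2}x_m)\ \text{ if } x^Tx<\rho,\qquad f(x)=0 \text{ otherwise},$$ with $\phi$ the standard normal density and $k>0$ the normalizing constant. Then $E(\lambda_n^{-1}X_n^2)$, viewed as a function of $\lambda_n\in(0,\infty)$, is nonincreasing. *)

theory Defs
  imports "HOL-Probability.Probability"
begin

definition tn_dens :: "real \<Rightarrow> ('n::finite \<Rightarrow> real) \<Rightarrow> real^'n \<Rightarrow> real" where
  "tn_dens \<rho> lam x =
     (if x \<bullet> x < \<rho>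
      then (\<Prod>m\<in>UNIV. lam m powr (-1/2) * std_normal_density (lam m powr (-1/2) * x $ m))
      else 0)"

definition tn_const :: "real \<Rightarrow> ('n::finite \<Rightarrow> real) \<Rightarrow> real" where
  "tn_const \<rho> lam = 1 / (\<integral>x. tn_dens \<rho> lam x \<partial>lborel)"

definition tn_pdf :: "real \<Rightarrow> ('n::finite \<Rightarrow> real) \<Rightarrow> real^'n \<Rightarrow> real" where
  "tn_pdf \<rho> lam x = tn_const \<rho> lam * tn_dens \<rho> lam x"

definition tn_expect :: "real \<Rightarrow> ('n::finite \<Rightarrow> real) \<Rightarrow> 'n \<Rightarrow> real" where
  "tn_expect \<rho> lam n = (\<integral>x. (x $ n)\<^sup>2 / lam n * tn_pdf \<rho> lam x \<partial>lborel)"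

end

theory Submission
  imports Defs
begin



lemma emeasure_affine_pre:
  fixes c t :: real and A :: "real set"
  assumes c: "c \<noteq> 0" and A[measurable]: "A \<in> sets borel"
  shows "emeasure lborel ((\<lambda>x. t + c*x) -` A) = ennreal (1/\<bar>c\<bar>) * emeasure lborel A"
proof -
  have "emeasure lborel A = emeasure (density (distr lborel borel (\<lambda>x. t + c * x)) (\<lambda>_. ennreal \<bar>c\<bar>)) A"
    using lborel_real_affine[OF c, of t] by simp
  also have "\<dots> = ennreal \<bar>c\<bar> * emeasure lborel ((\<lambda>x. t + c*x) -` A)"
    by (simp add: emeasure_density nn_integral_cmult_indicator emeasure_distr)
  finally have "emeasure lborel A = ennreal \<bar>c\<bar> * emeasure lborel ((\<lambda>x. t + c*x) -` A)" .
  then have "ennreal (1/\<bar>c\<bar>) * emeasure lborel A = (ennreal (1/\<bar>c\<bar>) * ennreal \<bar>c\<bar>) * emeasure lborel ((\<lambda>x. t + c*x) -` A)"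
    by (simp add: mult.assoc)
  also have "ennreal (1/\<bar>c\<bar>) * ennreal \<bar>c\<bar> = 1"
    using c by (simp flip: ennreal_mult)
  finally show ?thesis by simp
qed

lemma bm1:
  fixes A B C :: "real set" and \<theta> :: real
  assumes th: "0 < \<theta>" "\<theta> < 1"
    and [measurable]: "A \<in> sets borel" "B \<in> sets borel" "C \<in> sets borel"
    and ne: "A \<noteq> {}" "B \<noteq> {}" and bd: "bdd_above A" "bdd_below B"
    and sub: "\<And>a b. a \<in> A \<Longrightarrow> b \<in> B \<Longrightarrow> (1-\<theta>)*a + \<theta>*b \<in> C"
  shows "ennreal (1-\<theta>) * emeasure lborel A + ennreal \<theta> * emeasure lborel B \<le> emeasure lborel C"
proof (rule ennreal_le_epsilon)
  fix e :: real assume e: "0 < e"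
  obtain a0 where a0: "a0 \<in> A" "Sup A - e < a0"
    using less_cSupD[OF ne(1), of "Sup A - e"] e by auto
  obtain b0 where b0: "b0 \<in> B" "b0 < Inf B + e"
    using cInf_lessD[OF ne(2), of "Inf B + e"] e by auto
  define E1 where "E1 = (\<lambda>x. (-\<theta>*b0/(1-\<theta>)) + (1/(1-\<theta>))*x) -` A"
  define E2 where "E2 = (\<lambda>x. (-(1-\<theta>)*a0/\<theta>) + (1/\<theta>)*x) -` B"
  have pre: "(\<lambda>x. t + c*x) -` S \<in> sets borel" if "S \<in> sets borel" for t c :: real and S
  proof -
    have "(\<lambda>x. t + c*x) \<in> borel_measurable borel" by measurable
    from measurable_sets[OF this that] show ?thesis by simp
  qed
  have [measurable]: "E1 \<in> sets borel" "E2 \<in> sets borel"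
    unfolding E1_def E2_def by (rule pre, simp)+
  have m1: "emeasure lborel E1 = ennreal (1-\<theta>) * emeasure lborel A"
    unfolding E1_def using th by (subst emeasure_affine_pre) auto
  have m2: "emeasure lborel E2 = ennreal \<theta> * emeasure lborel B"
    unfolding E2_def using th by (subst emeasure_affine_pre) auto
  have id1: "(1-\<theta>)*((-\<theta>*b0/(1-\<theta>)) + (1/(1-\<theta>))*x) + \<theta>*b0 = x" for x
  proof -
    have h: "1-\<theta> \<noteq> 0" using th by simp
    show ?thesis unfolding distrib_left using h by simp
  qed
  have id2: "(1-\<theta>)*a0 + \<theta>*((-(1-\<theta>)*a0/\<theta>) + (1/\<theta>)*x) = x" for x
  proof -
    have h: "\<theta> \<noteq> 0" using th by simp
    have 1: "\<theta>*(-(1-\<theta>)*a0/\<theta>) = -(1-\<theta>)*a0" using h by simp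
    have 2: "\<theta>*((1/\<theta>)*x) = x" using h by simp
    show ?thesis unfolding distrib_left 1 2 by (simp add: algebra_simps)
  qed
  have E1C: "E1 \<subseteq> C"
  proof
    fix x assume "x \<in> E1"
    then have "(-\<theta>*b0/(1-\<theta>)) + (1/(1-\<theta>))*x \<in> A" by (simp add: E1_def)
    from sub[OF this b0(1)] show "x \<in> C" unfolding id1 .
  qed
  have E2C: "E2 \<subseteq> C"
  proof
    fix x assume "x \<in> E2"
    then have "(-(1-\<theta>)*a0/\<theta>) + (1/\<theta>)*x \<in> B" by (simp add: E2_def)
    from sub[OF a0(1) this] show "x \<in> C" unfolding id2 .
  qed
  have I: "E1 \<inter> E2 \<subseteq> {(1-\<theta>)*a0 + \<theta>*Inf B .. (1-\<theta>)*Sup A + \<theta>*b0}"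
  proof
    fix x assume x: "x \<in> E1 \<inter> E2"
    then have xa: "(-\<theta>*b0/(1-\<theta>)) + (1/(1-\<theta>))*x \<in> A" and xb: "(-(1-\<theta>)*a0/\<theta>) + (1/\<theta>)*x \<in> B"
      by (auto simp: E1_def E2_def)
    have "(-\<theta>*b0/(1-\<theta>)) + (1/(1-\<theta>))*x \<le> Sup A" using cSup_upper[OF xa bd(1)] .
    then have "(1-\<theta>)*((-\<theta>*b0/(1-\<theta>)) + (1/(1-\<theta>))*x) + \<theta>*b0 \<le> (1-\<theta>)*Sup A + \<theta>*b0"
      using th by (intro add_right_mono mult_left_mono) auto
    then have 1: "x \<le> (1-\<theta>)*Sup A + \<theta>*b0" unfolding id1 .
    have "Inf B \<le> (-(1-\<theta>)*a0/\<theta>) + (1/\<theta>)*x" using cInf_lower[OF xb bd(2)] .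
    then have "(1-\<theta>)*a0 + \<theta>*Inf B \<le> (1-\<theta>)*a0 + \<theta>*((-(1-\<theta>)*a0/\<theta>) + (1/\<theta>)*x)"
      using th by (intro add_left_mono mult_left_mono) auto
    then have 2: "(1-\<theta>)*a0 + \<theta>*Inf B \<le> x" unfolding id2 .
    from 1 2 show "x \<in> {(1-\<theta>)*a0 + \<theta>*Inf B .. (1-\<theta>)*Sup A + \<theta>*b0}" by simp
  qed
  have "emeasure lborel (E1 \<inter> E2) \<le> emeasure lborel {(1-\<theta>)*a0 + \<theta>*Inf B .. (1-\<theta>)*Sup A + \<theta>*b0}"
    by (rule emeasure_mono[OF I]) simp
  also have "\<dots> \<le> ennreal e"
  proof -
    have "(1-\<theta>)*Sup A + \<theta>*b0 - ((1-\<theta>)*a0 + \<theta>*Inf B) = (1-\<theta>)*(Sup A - a0) + \<theta>*(b0 - Inf B)"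
      by (simp add: algebra_simps)
    also have "\<dots> \<le> (1-\<theta>)*e + \<theta>*e"
      using a0 b0 th by (intro add_mono mult_left_mono) auto
    finally have "(1-\<theta>)*Sup A + \<theta>*b0 - ((1-\<theta>)*a0 + \<theta>*Inf B) \<le> e" by (simp add: algebra_simps)
    then show ?thesis using e by (auto simp: emeasure_lborel_Icc_eq intro: ennreal_leI)
  qed
  finally have Ie: "emeasure lborel (E1 \<inter> E2) \<le> ennreal e" .
  have "ennreal (1-\<theta>) * emeasure lborel A + ennreal \<theta> * emeasure lborel B
        = emeasure lborel E1 + emeasure lborel E2" by (simp add: m1 m2)
  also have "\<dots> = emeasure lborel (E1 \<union> E2) + emeasure lborel (E1 \<inter> E2)"
    by (rule emeasure_Un_Int) auto
  also have "\<dots> \<le> emeasure lborel C + ennreal e"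
    using E1C E2C by (intro add_mono Ie emeasure_mono) auto
  finally show "ennreal (1-\<theta>) * emeasure lborel A + ennreal \<theta> * emeasure lborel B \<le> emeasure lborel C + ennreal e" .
qed


lemma layer_cake:
  fixes u :: "real \<Rightarrow> real"
  assumes [measurable]: "u \<in> borel_measurable borel" and nn: "\<And>x. 0 \<le> u x"
  shows "(\<integral>\<^sup>+x. ennreal (u x) \<partial>lborel) =
         (\<integral>\<^sup>+s. indicator {0<..} s * emeasure lborel {x. s < u x} \<partial>lborel)"
proof -
  have "(\<integral>\<^sup>+x. ennreal (u x) \<partial>lborel) = (\<integral>\<^sup>+x. (\<integral>\<^sup>+s. indicator {0<..<u x} s \<partial>lborel) \<partial>lborel)"
    using nn by (intro nn_integral_cong) simp
  also have "\<dots> = (\<integral>\<^sup>+x. (\<integral>\<^sup>+s. indicator {p. 0 < snd p \<and> snd p < u (fst p)} (x,s) \<partial>lborel) \<partial>lborel)"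
    by (intro nn_integral_cong) (auto simp: indicator_def)
  also have "\<dots> = (\<integral>\<^sup>+s. (\<integral>\<^sup>+x. indicator {p. 0 < snd p \<and> snd p < u (fst p)} (x,s) \<partial>lborel) \<partial>lborel)"
    by (rule lborel_pair.Fubini'[symmetric]) measurable
  also have "\<dots> = (\<integral>\<^sup>+s. indicator {0<..} s * emeasure lborel {x. s < u x} \<partial>lborel)"
  proof (intro nn_integral_cong)
    fix s :: real
    have "(\<lambda>x. indicator {p. 0 < snd p \<and> snd p < u (fst p)} (x,s) :: ennreal)
          = (\<lambda>x. indicator {0<..} s * indicator {x. s < u x} x)"
      by (auto simp: indicator_def fun_eq_iff)
    then show "(\<integral>\<^sup>+x. indicator {p. 0 < snd p \<and> snd p < u (fst p)} (x,s) \<partial>lborel) = indicator {0<..} s * emeasure lborel {x. s < u x}"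
      by (simp add: nn_integral_cmult)
  qed
  finally show ?thesis .
qed

lemma layer_meas:
  fixes f :: "real \<Rightarrow> real"
  assumes [measurable]: "f \<in> borel_measurable borel"
  shows "(\<lambda>s. emeasure lborel {x. s < f x}) \<in> borel_measurable lborel"
proof -
  have S0: "{p \<in> space (lborel \<Otimes>\<^sub>M lborel). fst p < f (snd p)} \<in> sets (lborel \<Otimes>\<^sub>M lborel)" by measurable
  have S: "{p::real\<times>real. fst p < f (snd p)} \<in> sets (lborel \<Otimes>\<^sub>M lborel)"
    using S0 by (simp add: space_pair_measure)
  have "(\<lambda>s. emeasure lborel (Pair s -` {p::real\<times>real. fst p < f (snd p)})) \<in> borel_measurable lborel"
    by (rule lborel.measurable_emeasure_Pair[OF S])
  moreover have "\<And>s. Pair s -` {p::real\<times>real. fst p < f (snd p)} = {x. s < f x}" by auto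
  ultimately show ?thesis by simp
qed

lemma pl_norm:
  fixes f g h :: "real \<Rightarrow> real" and \<theta> :: real
  assumes th: "0 < \<theta>" "\<theta> < 1"
    and [measurable]: "f \<in> borel_measurable borel" "g \<in> borel_measurable borel" "h \<in> borel_measurable borel"
    and nn: "\<And>x. 0 \<le> f x" "\<And>x. 0 \<le> g x" "\<And>x. 0 \<le> h x"
    and le1: "\<And>x. f x \<le> 1" "\<And>x. g x \<le> 1"
    and ex: "\<And>s. 0 < s \<Longrightarrow> s < 1 \<Longrightarrow> \<exists>x. s < f x" "\<And>s. 0 < s \<Longrightarrow> s < 1 \<Longrightarrow> \<exists>x. s < g x"
    and bd: "\<And>s. 0 < s \<Longrightarrow> bdd_above {x. s < f x}" "\<And>s. 0 < s \<Longrightarrow> bdd_below {x. s < g x}"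
    and hyp: "\<And>x y. f x powr (1-\<theta>) * g y powr \<theta> \<le> h ((1-\<theta>)*x + \<theta>*y)"
  shows "ennreal (1-\<theta>) * (\<integral>\<^sup>+x. f x \<partial>lborel) + ennreal \<theta> * (\<integral>\<^sup>+x. g x \<partial>lborel)
         \<le> (\<integral>\<^sup>+x. h x \<partial>lborel)"
proof -
  have [measurable]: "(\<lambda>s. emeasure lborel {x. s < f x}) \<in> borel_measurable lborel"
    "(\<lambda>s. emeasure lborel {x. s < g x}) \<in> borel_measurable lborel"
    by (rule layer_meas, simp)+
  have pt: "indicator {0<..} s * (ennreal (1-\<theta>) * emeasure lborel {x. s < f x} + ennreal \<theta> * emeasure lborel {x. s < g x})
       \<le> indicator {0<..} s * emeasure lborel {x. s < h x}" for s :: real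
  proof (cases "0 < s")
    case False then show ?thesis by simp
  next
    case s: True
    show ?thesis
    proof (cases "s < 1")
      case False
      have "\<not> s < f x" "\<not> s < g x" for x using le1[of x] False by linarith+
      then have "{x. s < f x} = {}" "{x. s < g x} = {}" by auto
      then show ?thesis by simp
    next
      case True
      have "ennreal (1-\<theta>) * emeasure lborel {x. s < f x} + ennreal \<theta> * emeasure lborel {x. s < g x}
            \<le> emeasure lborel {x. s < h x}"
      proof (rule bm1[OF th])
        show "{x. s < f x} \<noteq> {}" "{x. s < g x} \<noteq> {}" using ex s True by auto
        show "bdd_above {x. s < f x}" "bdd_below {x. s < g x}" using bd s by auto
        show "{x. s < f x} \<in> sets borel" "{x. s < g x} \<in> sets borel" "{x. s < h x} \<in> sets borel"
          by measurable
      next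
        fix a b assume a: "a \<in> {x. s < f x}" and b: "b \<in> {x. s < g x}"
        have "s = s powr (1-\<theta>) * s powr \<theta>" using s by (simp flip: powr_add)
        also have "\<dots> < f a powr (1-\<theta>) * g b powr \<theta>"
          using a b s th by (intro mult_strict_mono powr_less_mono2) auto
        also have "\<dots> \<le> h ((1-\<theta>)*a + \<theta>*b)" by (rule hyp)
        finally show "(1-\<theta>)*a + \<theta>*b \<in> {x. s < h x}" by simp
      qed
      then show ?thesis by (intro mult_left_mono) auto
    qed
  qed
  have "ennreal (1-\<theta>) * (\<integral>\<^sup>+x. f x \<partial>lborel) + ennreal \<theta> * (\<integral>\<^sup>+x. g x \<partial>lborel)
      = ennreal (1-\<theta>) * (\<integral>\<^sup>+s. indicator {0<..} s * emeasure lborel {x. s < f x} \<partial>lborel)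
        + ennreal \<theta> * (\<integral>\<^sup>+s. indicator {0<..} s * emeasure lborel {x. s < g x} \<partial>lborel)"
    using nn by (simp add: layer_cake)
  also have "\<dots> = (\<integral>\<^sup>+s. indicator {0<..} s * (ennreal (1-\<theta>) * emeasure lborel {x. s < f x} + ennreal \<theta> * emeasure lborel {x. s < g x}) \<partial>lborel)"
    by (simp add: nn_integral_add nn_integral_cmult distrib_left mult_ac)
  also have "\<dots> \<le> (\<integral>\<^sup>+s. indicator {0<..} s * emeasure lborel {x. s < h x} \<partial>lborel)"
    by (rule nn_integral_mono) (rule pt)
  also have "\<dots> = (\<integral>\<^sup>+x. h x \<partial>lborel)"
    using nn by (simp add: layer_cake)
  finally show ?thesis .
qed



lemma young0:
  fixes a b \<theta> :: real
  assumes "0 \<le> a" "0 \<le> b" "0 < \<theta>" "\<theta> < 1"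
  shows "a powr (1-\<theta>) * b powr \<theta> \<le> (1-\<theta>)*a + \<theta>*b"
proof (cases "a = 0 \<or> b = 0")
  case True then show ?thesis using assms by auto
next
  case False then show ?thesis using assms by (intro Youngs_inequality_0) auto
qed

lemma pl:
  fixes f g h :: "real \<Rightarrow> real" and \<theta> :: real
  assumes th: "0 < \<theta>" "\<theta> < 1"
    and [measurable]: "f \<in> borel_measurable borel" "g \<in> borel_measurable borel" "h \<in> borel_measurable borel"
    and nn: "\<And>x. 0 \<le> f x" "\<And>x. 0 \<le> g x" "\<And>x. 0 \<le> h x"
    and bf: "\<And>x. f x \<le> Bf" and bg: "\<And>x. g x \<le> Bg"
    and bd: "\<And>s. 0 < s \<Longrightarrow> bdd_above {x. s < f x}" "\<And>s. 0 < s \<Longrightarrow> bdd_below {x. s < g x}"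
    and hyp: "\<And>x y. f x powr (1-\<theta>) * g y powr \<theta> \<le> h ((1-\<theta>)*x + \<theta>*y)"
    and int: "integrable lborel f" "integrable lborel g" "integrable lborel h"
  shows "(integral\<^sup>L lborel f) powr (1-\<theta>) * (integral\<^sup>L lborel g) powr \<theta> \<le> integral\<^sup>L lborel h"
proof -
  define Mf where "Mf = (SUP x. f x)"
  define Mg where "Mg = (SUP x. g x)"
  have bdf: "bdd_above (range f)" using bf by (intro bdd_aboveI[where M=Bf]) auto
  have bdg: "bdd_above (range g)" using bg by (intro bdd_aboveI[where M=Bg]) auto
  have fM: "f x \<le> Mf" for x unfolding Mf_def using bdf by (intro cSUP_upper) auto
  have gM: "g x \<le> Mg" for x unfolding Mg_def using bdg by (intro cSUP_upper) auto
  have Mf0: "0 \<le> Mf" using fM[of 0] nn(1)[of 0] by linarith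
  have Mg0: "0 \<le> Mg" using gM[of 0] nn(2)[of 0] by linarith
  have hnn: "0 \<le> integral\<^sup>L lborel h" using nn by (simp add: integral_nonneg)
  show ?thesis
  proof (cases "Mf = 0 \<or> Mg = 0")
    case True
    then have "(\<forall>x. f x = 0) \<or> (\<forall>x. g x = 0)" using fM gM nn by (meson antisym)
    then have "f = (\<lambda>_. 0) \<or> g = (\<lambda>_. 0)" by auto
    then have "integral\<^sup>L lborel f = 0 \<or> integral\<^sup>L lborel g = 0" by auto
    then show ?thesis using hnn by auto
  next
    case False
    then have Mfp: "0 < Mf" and Mgp: "0 < Mg" using Mf0 Mg0 by auto
    define c where "c = Mf powr (1-\<theta>) * Mg powr \<theta>"
    have cp: "0 < c" unfolding c_def using Mfp Mgp by simp
    define f' where "f' x = f x / Mf" for x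
    define g' where "g' x = g x / Mg" for x
    define h' where "h' x = h x / c" for x
    have "ennreal (1-\<theta>) * (\<integral>\<^sup>+x. f' x \<partial>lborel) + ennreal \<theta> * (\<integral>\<^sup>+x. g' x \<partial>lborel)
         \<le> (\<integral>\<^sup>+x. h' x \<partial>lborel)"
    proof (rule pl_norm[OF th])
      show "f' \<in> borel_measurable borel" "g' \<in> borel_measurable borel" "h' \<in> borel_measurable borel"
        unfolding f'_def g'_def h'_def by measurable
      show "0 \<le> f' x" "0 \<le> g' x" "0 \<le> h' x" for x
        unfolding f'_def g'_def h'_def using nn Mfp Mgp cp by auto
      show "f' x \<le> 1" "g' x \<le> 1" for x
        unfolding f'_def g'_def using fM gM Mfp Mgp by auto
    next
      fix s :: real assume s: "0 < s" "s < 1"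
      have "s * Mf < Mf" using s Mfp by simp
      then obtain x where "s * Mf < f x" using bdf unfolding Mf_def
        by (auto simp: less_cSUP_iff)
      then show "\<exists>x. s < f' x" unfolding f'_def using Mfp by (auto simp: field_simps)
    next
      fix s :: real assume s: "0 < s" "s < 1"
      have "s * Mg < Mg" using s Mgp by simp
      then obtain x where "s * Mg < g x" using bdg unfolding Mg_def
        by (auto simp: less_cSUP_iff)
      then show "\<exists>x. s < g' x" unfolding g'_def using Mgp by (auto simp: field_simps)
    next
      fix s :: real assume s: "0 < s"
      have "{x. s < f' x} = {x. s * Mf < f x}" unfolding f'_def using Mfp by (auto simp: field_simps)
      then show "bdd_above {x. s < f' x}" using bd(1)[of "s*Mf"] s Mfp by simp
      have "{x. s < g' x} = {x. s * Mg < g x}" unfolding g'_def using Mgp by (auto simp: field_simps)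
      then show "bdd_below {x. s < g' x}" using bd(2)[of "s*Mg"] s Mgp by simp
    next
      fix x y
      have "f' x powr (1-\<theta>) * g' y powr \<theta> = (f x powr (1-\<theta>) * g y powr \<theta>) / c"
        unfolding f'_def g'_def c_def using nn Mf0 Mg0 by (simp add: powr_divide)
      also have "\<dots> \<le> h ((1-\<theta>)*x + \<theta>*y) / c" using hyp cp by (simp add: divide_right_mono)
      finally show "f' x powr (1-\<theta>) * g' y powr \<theta> \<le> h' ((1-\<theta>)*x + \<theta>*y)" unfolding h'_def .
    qed
    moreover have "(\<integral>\<^sup>+x. f' x \<partial>lborel) = ennreal (integral\<^sup>L lborel f / Mf)"
      unfolding f'_def using int nn Mf0 by (subst nn_integral_eq_integral) auto
    moreover have "(\<integral>\<^sup>+x. g' x \<partial>lborel) = ennreal (integral\<^sup>L lborel g / Mg)"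
      unfolding g'_def using int nn Mg0 by (subst nn_integral_eq_integral) auto
    moreover have "(\<integral>\<^sup>+x. h' x \<partial>lborel) = ennreal (integral\<^sup>L lborel h / c)"
      unfolding h'_def using int nn cp by (subst nn_integral_eq_integral) auto
    moreover have fi: "0 \<le> integral\<^sup>L lborel f" "0 \<le> integral\<^sup>L lborel g" using nn by (simp_all add: integral_nonneg)
    moreover have "ennreal ((1-\<theta>) * (integral\<^sup>L lborel f / Mf) + \<theta> * (integral\<^sup>L lborel g / Mg))
       = ennreal (1-\<theta>) * ennreal (integral\<^sup>L lborel f / Mf) + ennreal \<theta> * ennreal (integral\<^sup>L lborel g / Mg)"
    proof -
      have gen: "ennreal (a*x + b*y) = ennreal a * ennreal x + ennreal b * ennreal y"
        if "0\<le>a" "0\<le>b" "0\<le>x" "0\<le>y" for a b x y :: real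
        using that by (simp add: ennreal_plus ennreal_mult)
      show ?thesis using th Mf0 Mg0 fi by (intro gen) auto
    qed
    ultimately have "ennreal ((1-\<theta>) * (integral\<^sup>L lborel f / Mf) + \<theta> * (integral\<^sup>L lborel g / Mg))
        \<le> ennreal (integral\<^sup>L lborel h / c)"
      by simp
    then have A: "(1-\<theta>) * (integral\<^sup>L lborel f / Mf) + \<theta> * (integral\<^sup>L lborel g / Mg) \<le> integral\<^sup>L lborel h / c"
      using hnn cp by (subst (asm) ennreal_le_iff) auto
    have "(integral\<^sup>L lborel f / Mf) powr (1-\<theta>) * (integral\<^sup>L lborel g / Mg) powr \<theta>
          \<le> (1-\<theta>) * (integral\<^sup>L lborel f / Mf) + \<theta> * (integral\<^sup>L lborel g / Mg)"
      using fi Mf0 Mg0 th by (intro young0) auto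
    also note A
    finally have B: "(integral\<^sup>L lborel f / Mf) powr (1-\<theta>) * (integral\<^sup>L lborel g / Mg) powr \<theta> \<le> integral\<^sup>L lborel h / c" .
    have "(integral\<^sup>L lborel f) powr (1-\<theta>) * (integral\<^sup>L lborel g) powr \<theta>
        = c * ((integral\<^sup>L lborel f / Mf) powr (1-\<theta>) * (integral\<^sup>L lborel g / Mg) powr \<theta>)"
      unfolding c_def using fi Mfp Mgp by (simp add: powr_divide field_simps)
    also have "\<dots> \<le> c * (integral\<^sup>L lborel h / c)" using B cp by (intro mult_left_mono) auto
    also have "\<dots> = integral\<^sup>L lborel h" using cp by simp
    finally show ?thesis .
  qed
qed




definition nd :: "real \<Rightarrow> real \<Rightarrow> real" where
  "nd c z = normal_density 0 (sqrt c) z"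

lemma nd_nonneg[simp]: "0 \<le> nd c z" by (simp add: nd_def)
lemma nd_meas[measurable]: "nd c \<in> borel_measurable borel" unfolding nd_def by measurable
lemma nd_int[simp]: "c > 0 \<Longrightarrow> integrable lborel (nd c)" unfolding nd_def by (rule integrable_normal_density) simp
lemma nd_integral[simp]: "c > 0 \<Longrightarrow> (\<integral>x. nd c x \<partial>lborel) = 1" unfolding nd_def by (rule integral_normal_density) simp
lemma nd_nn_integral: "c > 0 \<Longrightarrow> (\<integral>\<^sup>+x. ennreal (nd c x) \<partial>lborel) = 1"
  by (subst nn_integral_eq_integral) auto

lemma nd_alt: "c > 0 \<Longrightarrow> nd c z = (1 / sqrt (2*pi*c)) * exp (- z\<^sup>2 / (2*c))"
  unfolding nd_def normal_density_def by simp

lemma powr_exp_lc: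
  fixes A a b \<theta> :: real
  assumes "0 < A"
  shows "(A * exp a) powr (1-\<theta>) * (A * exp b) powr \<theta> = A * exp ((1-\<theta>)*a + \<theta>*b)"
proof -
  have "(A * exp a) powr (1-\<theta>) = exp ((1-\<theta>) * (ln A + a))" using assms by (simp add: powr_def ln_mult)
  moreover have "(A * exp b) powr \<theta> = exp (\<theta> * (ln A + b))" using assms by (simp add: powr_def ln_mult)
  ultimately have "(A * exp a) powr (1-\<theta>) * (A * exp b) powr \<theta> = exp (ln A + ((1-\<theta>)*a + \<theta>*b))"
    by (simp add: exp_add[symmetric] algebra_simps)
  also have "\<dots> = A * exp ((1-\<theta>)*a + \<theta>*b)" using assms by (simp add: exp_add)
  finally show ?thesis .
qed

lemma nd_lc:
  assumes c: "c > 0" and th: "0 < \<theta>" "\<theta> < 1"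
  shows "nd c x powr (1-\<theta>) * nd c y powr \<theta> \<le> nd c ((1-\<theta>)*x + \<theta>*y)"
proof -
  define A where "A = 1 / sqrt (2*pi*c)"
  have A: "0 < A" unfolding A_def using c by simp
  have "nd c x powr (1-\<theta>) * nd c y powr \<theta> = A * exp ((1-\<theta>)*(- x\<^sup>2 / (2*c)) + \<theta>*(- y\<^sup>2 / (2*c)))"
    unfolding nd_alt[OF c] A_def[symmetric] by (rule powr_exp_lc[OF A])
  also have "\<dots> \<le> A * exp (- ((1-\<theta>)*x + \<theta>*y)\<^sup>2 / (2*c))"
  proof -
    have "((1-\<theta>)*x + \<theta>*y)\<^sup>2 \<le> (1-\<theta>)*x\<^sup>2 + \<theta>*y\<^sup>2"
    proof -
      have "(1-\<theta>)*x\<^sup>2 + \<theta>*y\<^sup>2 - ((1-\<theta>)*x + \<theta>*y)\<^sup>2 = \<theta>*(1-\<theta>)*(x-y)\<^sup>2"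
        by (simp add: power2_eq_square algebra_simps)
      moreover have "0 \<le> \<theta>*(1-\<theta>)*(x-y)\<^sup>2" using th by simp
      ultimately show ?thesis by linarith
    qed
    then have "((1-\<theta>)*x + \<theta>*y)\<^sup>2 / (2*c) \<le> ((1-\<theta>)*x\<^sup>2 + \<theta>*y\<^sup>2) / (2*c)"
      using c by (intro divide_right_mono) auto
    moreover have "(1-\<theta>)*(- x\<^sup>2 / (2*c)) + \<theta>*(- y\<^sup>2 / (2*c)) = - (((1-\<theta>)*x\<^sup>2 + \<theta>*y\<^sup>2) / (2*c))"
      by (simp add: add_divide_distrib)
    ultimately have "(1-\<theta>)*(- x\<^sup>2 / (2*c)) + \<theta>*(- y\<^sup>2 / (2*c)) \<le> - ((1-\<theta>)*x + \<theta>*y)\<^sup>2 / (2*c)"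
      by simp
    then show ?thesis using A by simp
  qed
  also have "\<dots> = nd c ((1-\<theta>)*x + \<theta>*y)" unfolding nd_alt[OF c] A_def by simp
  finally show ?thesis .
qed

lemma nd_le: "c > 0 \<Longrightarrow> nd c z \<le> 1 / sqrt (2*pi*c)"
proof -
  assume c: "c > 0"
  have "exp (- z\<^sup>2 / (2*c)) \<le> 1" using c by simp
  then have "exp (- z\<^sup>2 / (2*c)) / sqrt (2*pi*c) \<le> 1 / sqrt (2*pi*c)"
    using c by (intro divide_right_mono) auto
  then show ?thesis using c by (simp add: nd_alt)
qed

lemma nd_sup_bdd:
  assumes c: "c > 0" and s: "s > 0"
  shows "{z. s < nd c z} \<subseteq> {-sqrt (2*c/ (s * sqrt (2*pi*c)))..sqrt (2*c/ (s * sqrt (2*pi*c)))}"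
proof
  fix z assume "z \<in> {z. s < nd c z}"
  then have lt: "s < (1 / sqrt (2*pi*c)) * exp (- z\<^sup>2 / (2*c))" using c by (simp add: nd_alt)
  define u where "u = z\<^sup>2 / (2*c)"
  have u: "0 \<le> u" unfolding u_def using c by simp
  have "exp (- u) \<le> 1 / (1 + u)"
  proof -
    have "1 + u \<le> exp u" by (rule exp_ge_add_one_self)
    then show ?thesis using u by (simp add: exp_minus field_simps)
  qed
  moreover have "exp (- z\<^sup>2 / (2*c)) = exp (-u)" unfolding u_def by simp
  ultimately have "(1 / sqrt (2*pi*c)) * exp (- z\<^sup>2 / (2*c)) \<le> (1 / sqrt (2*pi*c)) * (1 / (1+u))"
    using c by (intro mult_left_mono) auto
  then have "s < (1 / sqrt (2*pi*c)) * (1 / (1+u))" using lt by linarith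
  define K where "K = sqrt (2*pi*c)"
  have K: "0 < K" unfolding K_def using c by simp
  have "s < 1 / (K * (1+u))" using \<open>s < (1 / sqrt (2*pi*c)) * (1 / (1+u))\<close> unfolding K_def[symmetric] by simp
  then have "s * (K * (1+u)) < 1" using K u by (simp add: less_divide_eq)
  then have "(s*K) + (s*K) * u < 1" by (simp add: algebra_simps)
  moreover have "0 < s*K" using s K by simp
  ultimately have "(s*K) * u < 1" by linarith
  then have "u < 1 / (s * K)" using s K by (simp add: less_divide_eq mult.commute)
  then have "u < 1 / (s * sqrt (2*pi*c))" unfolding K_def .
  then have "z\<^sup>2 < 2*c / (s * sqrt (2*pi*c))" unfolding u_def using c by (simp add: field_simps)
  then have "\<bar>z\<bar> < sqrt (2*c / (s * sqrt (2*pi*c)))"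
    using real_less_rsqrt[of "\<bar>z\<bar>"] by simp
  then show "z \<in> {-sqrt (2*c/ (s * sqrt (2*pi*c)))..sqrt (2*c/ (s * sqrt (2*pi*c)))}" by auto
qed




definition GI :: "('i \<Rightarrow> real) \<Rightarrow> 'i set \<Rightarrow> real \<Rightarrow> ennreal" where
  "GI w I t = (\<integral>\<^sup>+\<omega>. ennreal (indicator {..<t} (\<Sum>i\<in>I. (\<omega> i)\<^sup>2) * (\<Prod>i\<in>I. nd (w i) (\<omega> i))) \<partial>Pi\<^sub>M I (\<lambda>_. lborel))"

definition Gr :: "('i \<Rightarrow> real) \<Rightarrow> 'i set \<Rightarrow> real \<Rightarrow> real" where
  "Gr w I t = enn2real (GI w I t)"

interpretation lbps: product_sigma_finite "\<lambda>_. lborel" by standard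

lemma GI_insert_gen:
  fixes \<phi> :: "real \<Rightarrow> real"
  assumes I: "finite I" "j \<notin> I" and [measurable]: "\<phi> \<in> borel_measurable borel" and nn: "\<And>y. 0 \<le> \<phi> y"
  shows "(\<integral>\<^sup>+\<omega>. ennreal (\<phi> (\<omega> j) * indicator {..<t} (\<Sum>i\<in>insert j I. (\<omega> i)\<^sup>2) * (\<Prod>i\<in>insert j I. nd (w i) (\<omega> i))) \<partial>Pi\<^sub>M (insert j I) (\<lambda>_. lborel))
       = (\<integral>\<^sup>+y. ennreal (\<phi> y * nd (w j) y) * GI w I (t - y\<^sup>2) \<partial>lborel)"
proof -
  have "(\<integral>\<^sup>+\<omega>. ennreal (\<phi> (\<omega> j) * indicator {..<t} (\<Sum>i\<in>insert j I. (\<omega> i)\<^sup>2) * (\<Prod>i\<in>insert j I. nd (w i) (\<omega> i))) \<partial>Pi\<^sub>M (insert j I) (\<lambda>_. lborel))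
     = (\<integral>\<^sup>+y. (\<integral>\<^sup>+x. ennreal (\<phi> ((x(j:=y)) j) * indicator {..<t} (\<Sum>i\<in>insert j I. ((x(j:=y)) i)\<^sup>2) * (\<Prod>i\<in>insert j I. nd (w i) ((x(j:=y)) i))) \<partial>Pi\<^sub>M I (\<lambda>_. lborel)) \<partial>lborel)"
    using I by (subst lbps.product_nn_integral_insert_rev) auto
  also have "\<dots> = (\<integral>\<^sup>+y. ennreal (\<phi> y * nd (w j) y) * GI w I (t - y\<^sup>2) \<partial>lborel)"
  proof (rule nn_integral_cong)
    fix y :: real
    have eq: "ennreal (\<phi> ((x(j:=y)) j) * indicator {..<t} (\<Sum>i\<in>insert j I. ((x(j:=y)) i)\<^sup>2) * (\<Prod>i\<in>insert j I. nd (w i) ((x(j:=y)) i)))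
        = ennreal (\<phi> y * nd (w j) y) * ennreal (indicator {..<t - y\<^sup>2} (\<Sum>i\<in>I. (x i)\<^sup>2) * (\<Prod>i\<in>I. nd (w i) (x i)))" for x :: "'a \<Rightarrow> real"
    proof -
      have s: "(\<Sum>i\<in>I. ((x(j:=y)) i)\<^sup>2) = (\<Sum>i\<in>I. (x i)\<^sup>2)" using I by (intro sum.cong) auto
      have p: "(\<Prod>i\<in>I. nd (w i) ((x(j:=y)) i)) = (\<Prod>i\<in>I. nd (w i) (x i))" using I by (intro prod.cong) auto
      have ind: "indicator {..<t} (y\<^sup>2 + (\<Sum>i\<in>I. (x i)\<^sup>2)) = (indicator {..<t - y\<^sup>2} (\<Sum>i\<in>I. (x i)\<^sup>2) :: real)"
        by (auto simp: indicator_def)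
      show ?thesis using I nn s p ind
        by (simp add: ennreal_mult'[symmetric] prod_nonneg mult_ac)
    qed
    show "(\<integral>\<^sup>+x. ennreal (\<phi> ((x(j:=y)) j) * indicator {..<t} (\<Sum>i\<in>insert j I. ((x(j:=y)) i)\<^sup>2) * (\<Prod>i\<in>insert j I. nd (w i) ((x(j:=y)) i))) \<partial>Pi\<^sub>M I (\<lambda>_. lborel))
        = ennreal (\<phi> y * nd (w j) y) * GI w I (t - y\<^sup>2)"
      unfolding eq GI_def by (subst nn_integral_cmult) auto
  qed
  finally show ?thesis .
qed

lemma GI_insert:
  assumes I: "finite I" "j \<notin> I"
  shows "GI w (insert j I) t = (\<integral>\<^sup>+y. ennreal (nd (w j) y) * GI w I (t - y\<^sup>2) \<partial>lborel)"
  using GI_insert_gen[OF I, of "\<lambda>_. 1" t w] unfolding GI_def by simp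

lemma GI_le1:
  assumes I: "finite I" and w: "\<And>i. i \<in> I \<Longrightarrow> 0 < w i"
  shows "GI w I t \<le> 1"
proof -
  have "GI w I t \<le> (\<integral>\<^sup>+\<omega>. (\<Prod>i\<in>I. ennreal (nd (w i) (\<omega> i))) \<partial>Pi\<^sub>M I (\<lambda>_. lborel))"
    unfolding GI_def
  proof (rule nn_integral_mono)
    fix \<omega> :: "'a \<Rightarrow> real"
    have "indicator {..<t} (\<Sum>i\<in>I. (\<omega> i)\<^sup>2) * (\<Prod>i\<in>I. nd (w i) (\<omega> i)) \<le> (\<Prod>i\<in>I. nd (w i) (\<omega> i))"
      by (simp add: indicator_def prod_nonneg)
    then show "ennreal (indicator {..<t} (\<Sum>i\<in>I. (\<omega> i)\<^sup>2) * (\<Prod>i\<in>I. nd (w i) (\<omega> i))) \<le> (\<Prod>i\<in>I. ennreal (nd (w i) (\<omega> i)))"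
      by (simp add: prod_ennreal prod_nonneg ennreal_leI)
  qed
  also have "\<dots> = (\<Prod>i\<in>I. (\<integral>\<^sup>+x. ennreal (nd (w i) x) \<partial>lborel))"
    using I by (subst lbps.product_nn_integral_prod) auto
  also have "\<dots> = 1" using w by (simp add: nd_nn_integral)
  finally show ?thesis .
qed

lemma GI_mono:
  assumes "s \<le> t" shows "GI w I s \<le> GI w I t"
  unfolding GI_def
  by (intro nn_integral_mono ennreal_leI mult_right_mono) (use assms in \<open>auto simp: indicator_def prod_nonneg\<close>)

lemma GI_eq:
  assumes I: "finite I" and w: "\<And>i. i \<in> I \<Longrightarrow> 0 < w i"
  shows "GI w I t = ennreal (Gr w I t)"
proof -
  have "GI w I t \<le> 1" using GI_le1[of I w t] I w by blast
  then have "GI w I t < top" by (simp add: le_less_trans)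
  then show ?thesis unfolding Gr_def by (simp add: less_top)
qed

lemma Gr_nonneg: "0 \<le> Gr w I t" by (simp add: Gr_def)

lemma Gr_le1:
  assumes I: "finite I" and w: "\<And>i. i \<in> I \<Longrightarrow> 0 < w i"
  shows "Gr w I t \<le> 1"
proof -
  have "GI w I t \<le> 1" using GI_le1[of I w t] I w by blast
  then show ?thesis unfolding Gr_def by (simp add: enn2real_leI)
qed

lemma Gr_mono:
  assumes I: "finite I" and w: "\<And>i. i \<in> I \<Longrightarrow> 0 < w i" and "s \<le> t"
  shows "Gr w I s \<le> Gr w I t"
proof -
  have "GI w I s = ennreal (Gr w I s)" "GI w I t = ennreal (Gr w I t)" using GI_eq[of I w] I w by blast+
  then show ?thesis using GI_mono[OF assms(3), where w=w and I=I] by (simp add: Gr_nonneg)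
qed

lemma Gr_meas:
  assumes I: "finite I" and w: "\<And>i. i \<in> I \<Longrightarrow> 0 < w i"
  shows "Gr w I \<in> borel_measurable borel"
  by (rule borel_measurable_mono) (auto simp: mono_def intro: Gr_mono[OF I w])


lemma Gr_insert:
  assumes I: "finite I" "j \<notin> I" and w: "\<And>i. i \<in> insert j I \<Longrightarrow> 0 < w i"
  shows "Gr w (insert j I) t = (\<integral>y. nd (w j) y * Gr w I (t - y\<^sup>2) \<partial>lborel)"
proof -
  have wI: "\<And>i. i \<in> I \<Longrightarrow> 0 < w i" using w by auto
  note [measurable] = Gr_meas[OF I(1) wI]
  have "GI w (insert j I) t = (\<integral>\<^sup>+y. ennreal (nd (w j) y) * GI w I (t - y\<^sup>2) \<partial>lborel)"
    by (rule GI_insert[OF I])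
  also have "\<dots> = (\<integral>\<^sup>+y. ennreal (nd (w j) y * Gr w I (t - y\<^sup>2)) \<partial>lborel)"
  proof (rule nn_integral_cong)
    fix y
    have "GI w I (t - y\<^sup>2) = ennreal (Gr w I (t - y\<^sup>2))" using GI_eq[of I w] I wI by blast
    then show "ennreal (nd (w j) y) * GI w I (t - y\<^sup>2) = ennreal (nd (w j) y * Gr w I (t - y\<^sup>2))"
      by (simp add: ennreal_mult Gr_nonneg)
  qed
  finally have "Gr w (insert j I) t = enn2real (\<integral>\<^sup>+y. ennreal (nd (w j) y * Gr w I (t - y\<^sup>2)) \<partial>lborel)"
    unfolding Gr_def by simp
  also have "\<dots> = (\<integral>y. nd (w j) y * Gr w I (t - y\<^sup>2) \<partial>lborel)"
    by (rule integral_eq_nn_integral[symmetric]) (auto simp: Gr_nonneg)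
  finally show ?thesis .
qed

definition lc :: "(real \<Rightarrow> real) \<Rightarrow> bool" where
  "lc F \<longleftrightarrow> (\<forall>x y \<theta>. 0 < \<theta> \<longrightarrow> \<theta> < 1 \<longrightarrow> F x powr (1-\<theta>) * F y powr \<theta> \<le> F ((1-\<theta>)*x + \<theta>*y))"

lemma Gr_empty: "Gr w {} t = (if 0 < t then 1 else 0)"
  unfolding Gr_def GI_def by (simp add: PiM_empty nn_integral_count_space_finite)

lemma lc_Gr_empty: "lc (Gr w {})"
  unfolding lc_def Gr_empty
proof (intro allI impI)
  fix x y \<theta> :: real assume th: "0 < \<theta>" "\<theta> < 1"
  show "(if 0 < x then 1 else 0) powr (1-\<theta>) * (if 0 < y then 1 else 0) powr \<theta> \<le> (if 0 < (1-\<theta>)*x + \<theta>*y then 1 else (0::real))"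
  proof (cases "0 < x \<and> 0 < y")
    case True
    then have "0 < (1-\<theta>)*x + \<theta>*y" using th by (intro add_pos_pos mult_pos_pos) auto
    then show ?thesis using True by simp
  next
    case False then show ?thesis by auto
  qed
qed


lemma lc_Gr_insert:
  assumes I: "finite I" "j \<notin> I" and w: "\<And>i. i \<in> insert j I \<Longrightarrow> 0 < w i"
    and IH: "lc (Gr w I)"
  shows "lc (Gr w (insert j I))"
  unfolding lc_def
proof (intro allI impI)
  fix t0 t1 \<theta> :: real assume th: "0 < \<theta>" "\<theta> < 1"
  have wI: "\<And>i. i \<in> I \<Longrightarrow> 0 < w i" using w by auto
  have wj: "0 < w j" using w by auto
  note [measurable] = Gr_meas[OF I(1) wI]
  have G01: "0 \<le> Gr w I u" "Gr w I u \<le> 1" for u using Gr_nonneg Gr_le1[of I w u] I wI by blast+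
  define F where "F t z = nd (w j) z * Gr w I (t - z\<^sup>2)" for t z
  have Fm[measurable]: "F t \<in> borel_measurable borel" for t unfolding F_def by measurable
  have Fnn: "0 \<le> F t z" for t z unfolding F_def using G01 by simp
  have Fle: "F t z \<le> nd (w j) z" for t z unfolding F_def using G01[of "t - z\<^sup>2"] by (simp add: mult_left_le)
  have Fb: "F t z \<le> 1 / sqrt (2*pi*w j)" for t z using Fle[of t z] nd_le[OF wj, of z] by linarith
  have Fint: "integrable lborel (F t)" for t
    by (rule Bochner_Integration.integrable_bound[OF nd_int[OF wj]]) (auto simp: Fnn Fle)
  have Fbd: "{z. s < F t z} \<subseteq> {-sqrt (2*w j/ (s * sqrt (2*pi*w j)))..sqrt (2*w j/ (s * sqrt (2*pi*w j)))}"
    if "0 < s" for s t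
  proof -
    have "{z. s < F t z} \<subseteq> {z. s < nd (w j) z}" using Fle by (auto intro: less_le_trans)
    then show ?thesis using nd_sup_bdd[OF wj that] by blast
  qed
  have "(integral\<^sup>L lborel (F t0)) powr (1-\<theta>) * (integral\<^sup>L lborel (F t1)) powr \<theta>
        \<le> integral\<^sup>L lborel (F ((1-\<theta>)*t0 + \<theta>*t1))"
  proof (rule pl[OF th])
    show "F t0 z \<le> 1 / sqrt (2*pi*w j)" "F t1 z \<le> 1 / sqrt (2*pi*w j)" for z by (rule Fb)+
    show "bdd_above {x. s < F t0 x}" if "0 < s" for s
      using Fbd[OF that, of t0] by (meson bdd_above_Icc bdd_above_mono)
    show "bdd_below {x. s < F t1 x}" if "0 < s" for s
      using Fbd[OF that, of t1] by (meson bdd_below_Icc bdd_below_mono)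
  next
    fix x y
    define z where "z = (1-\<theta>)*x + \<theta>*y"
    have sq: "z\<^sup>2 \<le> (1-\<theta>)*x\<^sup>2 + \<theta>*y\<^sup>2"
    proof -
      have "(1-\<theta>)*x\<^sup>2 + \<theta>*y\<^sup>2 - z\<^sup>2 = \<theta>*(1-\<theta>)*(x-y)\<^sup>2"
        unfolding z_def by (simp add: power2_eq_square algebra_simps)
      moreover have "0 \<le> \<theta>*(1-\<theta>)*(x-y)\<^sup>2" using th by simp
      ultimately show ?thesis by linarith
    qed
    have "Gr w I (t0 - x\<^sup>2) powr (1-\<theta>) * Gr w I (t1 - y\<^sup>2) powr \<theta>
          \<le> Gr w I ((1-\<theta>)*(t0 - x\<^sup>2) + \<theta>*(t1 - y\<^sup>2))"
      using IH th unfolding lc_def by blast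
    also have "\<dots> \<le> Gr w I (((1-\<theta>)*t0 + \<theta>*t1) - z\<^sup>2)"
    proof (rule Gr_mono[OF I(1) wI])
      show "(1-\<theta>)*(t0 - x\<^sup>2) + \<theta>*(t1 - y\<^sup>2) \<le> ((1-\<theta>)*t0 + \<theta>*t1) - z\<^sup>2"
        using sq by (simp add: algebra_simps)
    qed auto
    finally have g: "Gr w I (t0 - x\<^sup>2) powr (1-\<theta>) * Gr w I (t1 - y\<^sup>2) powr \<theta>
          \<le> Gr w I (((1-\<theta>)*t0 + \<theta>*t1) - z\<^sup>2)" .
    have n: "nd (w j) x powr (1-\<theta>) * nd (w j) y powr \<theta> \<le> nd (w j) z"
      unfolding z_def by (rule nd_lc[OF wj th])
    have "F t0 x powr (1-\<theta>) * F t1 y powr \<theta>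
        = (nd (w j) x powr (1-\<theta>) * nd (w j) y powr \<theta>) * (Gr w I (t0 - x\<^sup>2) powr (1-\<theta>) * Gr w I (t1 - y\<^sup>2) powr \<theta>)"
      unfolding F_def using G01 by (simp add: powr_mult mult_ac)
    also have "\<dots> \<le> nd (w j) z * Gr w I (((1-\<theta>)*t0 + \<theta>*t1) - z\<^sup>2)"
      using n g G01 by (intro mult_mono) auto
    finally show "F t0 x powr (1-\<theta>) * F t1 y powr \<theta> \<le> F ((1-\<theta>)*t0 + \<theta>*t1) ((1-\<theta>)*x + \<theta>*y)"
      unfolding F_def z_def .
  qed (auto simp: Fnn Fint)
  moreover have "Gr w (insert j I) t = integral\<^sup>L lborel (F t)" for t
    unfolding F_def using Gr_insert[of I j w t] I w by blast
  ultimately show "Gr w (insert j I) t0 powr (1-\<theta>) * Gr w (insert j I) t1 powr \<theta>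
        \<le> Gr w (insert j I) ((1-\<theta>)*t0 + \<theta>*t1)" by simp
qed

lemma lc_Gr:
  assumes I: "finite I" and w: "\<And>i. i \<in> I \<Longrightarrow> 0 < w i"
  shows "lc (Gr w I)"
  using assms
proof (induction I rule: finite_induct)
  case empty show ?case by (rule lc_Gr_empty)
next
  case (insert j I)
  have w': "\<And>i. i \<in> I \<Longrightarrow> 0 < w i" using insert(4) by auto
  have "lc (Gr w I)" using insert(3) w' by blast
  then show ?case using lc_Gr_insert[of I j w] insert(1,2,4) by blast
qed




lemma lc_mult2:
  fixes G :: "real \<Rightarrow> real"
  assumes lc: "lc G" and mono: "mono G" and nn: "\<And>x. 0 \<le> G x"
    and o: "x1 \<le> x2" "x1 \<le> x3" "x2 \<le> x4" "x3 \<le> x4" and s: "x1 + x4 \<le> x2 + x3"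
  shows "G x1 * G x4 \<le> G x2 * G x3"
proof -
  define y where "y = x2 + x3 - x1"
  have x4y: "x4 \<le> y" using s unfolding y_def by simp
  have G4: "G x4 \<le> G y" using mono x4y by (simp add: monoD)
  have x2y: "x2 \<le> y" "x3 \<le> y" using o unfolding y_def by auto
  have key: "G x1 * G y \<le> G x2 * G x3"
  proof (cases "x2 = x1 \<or> x2 = y")
    case True
    then have "(x2 = x1 \<and> x3 = y) \<or> (x2 = y \<and> x3 = x1)" unfolding y_def by auto
    then show ?thesis by (auto simp: mult.commute)
  next
    case False
    then have lt: "x1 < x2" "x2 < y" using o x2y by auto
    define \<theta> where "\<theta> = (x2 - x1) / (y - x1)"
    have th: "0 < \<theta>" "\<theta> < 1" unfolding \<theta>_def using lt by (auto simp: field_simps)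
    have tt: "\<theta>*(y-x1) = x2 - x1" unfolding \<theta>_def using lt by simp
    have e2: "x2 = (1-\<theta>)*x1 + \<theta>*y"
    proof -
      have "(1-\<theta>)*x1 + \<theta>*y = x1 + \<theta>*(y-x1)" by (simp add: algebra_simps)
      then show ?thesis using tt by simp
    qed
    have e3: "x3 = (1-(1-\<theta>))*x1 + (1-\<theta>)*y"
    proof -
      have "(1-(1-\<theta>))*x1 + (1-\<theta>)*y = y - \<theta>*(y-x1)" by (simp add: algebra_simps)
      then show ?thesis using tt unfolding y_def by simp
    qed
    have "G x1 powr (1-\<theta>) * G y powr \<theta> \<le> G x2"
      using lc th unfolding lc_def e2 by blast
    moreover have "G x1 powr (1-(1-\<theta>)) * G y powr (1-\<theta>) \<le> G x3"
    proof -
      have "0 < 1-\<theta>" "1-\<theta> < 1" using th by auto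
      then show ?thesis using lc unfolding lc_def e3 by blast
    qed
    ultimately have A: "(G x1 powr (1-\<theta>) * G y powr \<theta>) * (G x1 powr (1-(1-\<theta>)) * G y powr (1-\<theta>)) \<le> G x2 * G x3"
      by (intro mult_mono) (auto simp: nn)
    have C: "G x1 powr (1-\<theta>) * G x1 powr \<theta> = G x1"
      using nn[of x1] by (simp flip: powr_add)
    have D: "G y powr \<theta> * G y powr (1-\<theta>) = G y"
      using nn[of y] by (simp flip: powr_add)
    have "(G x1 powr (1-\<theta>) * G y powr \<theta>) * (G x1 powr (1-(1-\<theta>)) * G y powr (1-\<theta>))
          = (G x1 powr (1-\<theta>) * G x1 powr \<theta>) * (G y powr \<theta> * G y powr (1-\<theta>))"
      by (simp add: mult_ac)
    also have "\<dots> = G x1 * G y" unfolding C D ..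
    finally show ?thesis using A by simp
  qed
  have "G x1 * G x4 \<le> G x1 * G y" using G4 nn by (intro mult_left_mono) auto
  then show ?thesis using key by linarith
qed

lemma tp2_pt:
  fixes G :: "real \<Rightarrow> real"
  assumes lc: "lc G" and mono: "mono G" and nn: "\<And>x. 0 \<le> G x"
    and sr: "r\<^sup>2 \<le> s\<^sup>2" and ab: "0 \<le> a" "a \<le> b"
  shows "G (\<rho> - b * s\<^sup>2) * G (\<rho> - a * r\<^sup>2) \<le> G (\<rho> - b * r\<^sup>2) * G (\<rho> - a * s\<^sup>2)"
proof (rule lc_mult2[OF lc mono nn])
  have r0: "0 \<le> r\<^sup>2" by simp
  show "\<rho> - b * s\<^sup>2 \<le> \<rho> - b * r\<^sup>2" using sr ab by (intro diff_left_mono mult_left_mono) auto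
  show "\<rho> - b * s\<^sup>2 \<le> \<rho> - a * s\<^sup>2" using ab by (intro diff_left_mono mult_right_mono) auto
  show "\<rho> - b * r\<^sup>2 \<le> \<rho> - a * r\<^sup>2" using ab by (intro diff_left_mono mult_right_mono) auto
  show "\<rho> - a * s\<^sup>2 \<le> \<rho> - a * r\<^sup>2" using sr ab by (intro diff_left_mono mult_left_mono) auto
  have "0 \<le> (b-a)*(s\<^sup>2 - r\<^sup>2)" using sr ab by simp
  then show "\<rho> - b * s\<^sup>2 + (\<rho> - a * r\<^sup>2) \<le> \<rho> - b * r\<^sup>2 + (\<rho> - a * s\<^sup>2)"
    by (simp add: algebra_simps)
qed


lemma tp2_int:
  fixes G :: "real \<Rightarrow> real" and a b \<rho> :: real
  assumes lc: "lc G" and mono: "mono G" and nn: "\<And>x. 0 \<le> G x"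
    and Gm[measurable]: "G \<in> borel_measurable borel"
    and ab: "0 \<le> a" "a \<le> b"
  shows "(\<integral>\<^sup>+s. ennreal (s\<^sup>2 * nd 1 s * G (\<rho> - b * s\<^sup>2)) \<partial>lborel) * (\<integral>\<^sup>+s. ennreal (nd 1 s * G (\<rho> - a * s\<^sup>2)) \<partial>lborel)
       \<le> (\<integral>\<^sup>+s. ennreal (s\<^sup>2 * nd 1 s * G (\<rho> - a * s\<^sup>2)) \<partial>lborel) * (\<integral>\<^sup>+s. ennreal (nd 1 s * G (\<rho> - b * s\<^sup>2)) \<partial>lborel)"
proof -
  define P where "P s r = (s\<^sup>2 * nd 1 s * G (\<rho> - b * s\<^sup>2)) * (nd 1 r * G (\<rho> - a * r\<^sup>2))" for s r :: real
  define Q where "Q s r = (s\<^sup>2 * nd 1 s * G (\<rho> - a * s\<^sup>2)) * (nd 1 r * G (\<rho> - b * r\<^sup>2))" for s r :: real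
  have Pm[measurable]: "(\<lambda>p. P (fst p) (snd p)) \<in> borel_measurable (lborel \<Otimes>\<^sub>M lborel)"
    "(\<lambda>p. P (snd p) (fst p)) \<in> borel_measurable (lborel \<Otimes>\<^sub>M lborel)"
    unfolding P_def by measurable
  have Qm[measurable]: "(\<lambda>p. Q (fst p) (snd p)) \<in> borel_measurable (lborel \<Otimes>\<^sub>M lborel)"
    "(\<lambda>p. Q (snd p) (fst p)) \<in> borel_measurable (lborel \<Otimes>\<^sub>M lborel)"
    unfolding Q_def by measurable
  have [measurable]: "P s \<in> borel_measurable borel" "(\<lambda>r. P r s) \<in> borel_measurable borel"
    "Q s \<in> borel_measurable borel" "(\<lambda>r. Q r s) \<in> borel_measurable borel" for s
    unfolding P_def Q_def by measurable
  have Pnn: "0 \<le> P s r" for s r unfolding P_def using nn by simp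
  have Qnn: "0 \<le> Q s r" for s r unfolding Q_def using nn by simp
  have prod: "(\<integral>\<^sup>+s. ennreal (f s) \<partial>lborel) * (\<integral>\<^sup>+s. ennreal (g s) \<partial>lborel) = (\<integral>\<^sup>+s. \<integral>\<^sup>+r. ennreal (f s * g r) \<partial>lborel \<partial>lborel)"
    if [measurable]: "f \<in> borel_measurable borel" "g \<in> borel_measurable borel" and "\<And>x. 0 \<le> f x" "\<And>x. 0 \<le> g x" for f g :: "real \<Rightarrow> real"
    using that(3,4) by (simp add: nn_integral_multc nn_integral_cmult ennreal_mult' flip: nn_integral_multc)
  have L: "(\<integral>\<^sup>+s. ennreal (s\<^sup>2 * nd 1 s * G (\<rho> - b * s\<^sup>2)) \<partial>lborel) * (\<integral>\<^sup>+s. ennreal (nd 1 s * G (\<rho> - a * s\<^sup>2)) \<partial>lborel)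
     = (\<integral>\<^sup>+s. \<integral>\<^sup>+r. ennreal (P s r) \<partial>lborel \<partial>lborel)"
    unfolding P_def by (rule prod) (auto simp: nn)
  have R: "(\<integral>\<^sup>+s. ennreal (s\<^sup>2 * nd 1 s * G (\<rho> - a * s\<^sup>2)) \<partial>lborel) * (\<integral>\<^sup>+s. ennreal (nd 1 s * G (\<rho> - b * s\<^sup>2)) \<partial>lborel)
     = (\<integral>\<^sup>+s. \<integral>\<^sup>+r. ennreal (Q s r) \<partial>lborel \<partial>lborel)"
    unfolding Q_def by (rule prod) (auto simp: nn)
  have swapP: "(\<integral>\<^sup>+s. \<integral>\<^sup>+r. ennreal (P s r) \<partial>lborel \<partial>lborel) = (\<integral>\<^sup>+s. \<integral>\<^sup>+r. ennreal (P r s) \<partial>lborel \<partial>lborel)"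
  proof -
    have "case_prod (\<lambda>x y. ennreal (P x y)) \<in> borel_measurable (lborel \<Otimes>\<^sub>M lborel)"
      using Pm(1) by (simp add: case_prod_beta')
    from lborel_pair.Fubini'[OF this] show ?thesis by simp
  qed
  have swapQ: "(\<integral>\<^sup>+s. \<integral>\<^sup>+r. ennreal (Q s r) \<partial>lborel \<partial>lborel) = (\<integral>\<^sup>+s. \<integral>\<^sup>+r. ennreal (Q r s) \<partial>lborel \<partial>lborel)"
  proof -
    have "case_prod (\<lambda>x y. ennreal (Q x y)) \<in> borel_measurable (lborel \<Otimes>\<^sub>M lborel)"
      using Qm(1) by (simp add: case_prod_beta')
    from lborel_pair.Fubini'[OF this] show ?thesis by simp
  qed
  have pt: "P s r + P r s \<le> Q s r + Q r s" for s r
  proof -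
    define Ka where "Ka x = G (\<rho> - a * x\<^sup>2)" for x
    define Kb where "Kb x = G (\<rho> - b * x\<^sup>2)" for x
    have eq: "Q s r + Q r s - (P s r + P r s) = nd 1 s * nd 1 r * ((s\<^sup>2 - r\<^sup>2) * (Ka s * Kb r - Kb s * Ka r))"
      unfolding P_def Q_def Ka_def Kb_def by (simp add: algebra_simps)
    have "0 \<le> (s\<^sup>2 - r\<^sup>2) * (Ka s * Kb r - Kb s * Ka r)"
    proof (cases "r\<^sup>2 \<le> s\<^sup>2")
      case True
      have "Kb s * Ka r \<le> Kb r * Ka s" unfolding Ka_def Kb_def by (rule tp2_pt[OF lc mono nn True ab])
      then show ?thesis using True by (intro mult_nonneg_nonneg) (auto simp: mult.commute)
    next
      case False
      then have F: "s\<^sup>2 \<le> r\<^sup>2" by simp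
      have "Kb r * Ka s \<le> Kb s * Ka r" unfolding Ka_def Kb_def by (rule tp2_pt[OF lc mono nn F ab])
      then show ?thesis using F by (intro mult_nonpos_nonpos) (auto simp: mult.commute)
    qed
    then have "0 \<le> nd 1 s * nd 1 r * ((s\<^sup>2 - r\<^sup>2) * (Ka s * Kb r - Kb s * Ka r))" by simp
    then show ?thesis using eq by linarith
  qed
  define X where "X = (\<integral>\<^sup>+s. \<integral>\<^sup>+r. ennreal (P s r) \<partial>lborel \<partial>lborel)"
  define Y where "Y = (\<integral>\<^sup>+s. \<integral>\<^sup>+r. ennreal (Q s r) \<partial>lborel \<partial>lborel)"
  have "2 * X = X + X" by (simp add: mult_2)
  also have "\<dots> = (\<integral>\<^sup>+s. \<integral>\<^sup>+r. ennreal (P s r) \<partial>lborel \<partial>lborel) + (\<integral>\<^sup>+s. \<integral>\<^sup>+r. ennreal (P r s) \<partial>lborel \<partial>lborel)"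
    unfolding X_def using swapP by simp
  also have "\<dots> = (\<integral>\<^sup>+s. (\<integral>\<^sup>+r. ennreal (P s r) \<partial>lborel) + (\<integral>\<^sup>+r. ennreal (P r s) \<partial>lborel) \<partial>lborel)"
    by (rule nn_integral_add[symmetric]) measurable
  also have "\<dots> = (\<integral>\<^sup>+s. \<integral>\<^sup>+r. ennreal (P s r + P r s) \<partial>lborel \<partial>lborel)"
    by (intro nn_integral_cong, subst nn_integral_add[symmetric]) (auto simp: Pnn)
  also have "\<dots> \<le> (\<integral>\<^sup>+s. \<integral>\<^sup>+r. ennreal (Q s r + Q r s) \<partial>lborel \<partial>lborel)"
    by (intro nn_integral_mono ennreal_leI pt)
  also have "\<dots> = (\<integral>\<^sup>+s. (\<integral>\<^sup>+r. ennreal (Q s r) \<partial>lborel) + (\<integral>\<^sup>+r. ennreal (Q r s) \<partial>lborel) \<partial>lborel)"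
    by (intro nn_integral_cong, subst nn_integral_add[symmetric]) (auto simp: Qnn)
  also have "\<dots> = (\<integral>\<^sup>+s. \<integral>\<^sup>+r. ennreal (Q s r) \<partial>lborel \<partial>lborel) + (\<integral>\<^sup>+s. \<integral>\<^sup>+r. ennreal (Q r s) \<partial>lborel \<partial>lborel)"
    by (rule nn_integral_add) measurable
  also have "\<dots> = Y + Y" unfolding Y_def using swapQ by simp
  also have "\<dots> = 2 * Y" by (simp add: mult_2)
  finally have "2 * X \<le> 2 * Y" .
  then have "X \<le> Y" by (subst (asm) ennreal_mult_le_mult_iff) auto
  then show ?thesis unfolding L R X_def Y_def .
qed




lemma nd_eq_powr:
  assumes c: "0 < c"
  shows "c powr (-1/2) * std_normal_density (c powr (-1/2) * z) = nd c z"
proof -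
  have p: "c powr (-1/2) = 1 / sqrt c" using c by (simp add: powr_minus_divide powr_half_sqrt)
  have "(z / sqrt c)\<^sup>2 = z\<^sup>2 / c" using c by (simp add: power_divide)
  then show ?thesis using c unfolding p std_normal_density_def nd_alt[OF c]
    by (simp add: real_sqrt_mult field_simps)
qed

lemma dens_eq:
  assumes L: "\<And>m. 0 < L m"
  shows "tn_dens \<rho> L x = indicator {..<\<rho>} (x \<bullet> x) * (\<Prod>m\<in>UNIV. nd (L m) (x $ m))"
proof -
  have "L m powr (-1/2) * std_normal_density (L m powr (-1/2) * z) = nd (L m) z" for m z
    by (rule nd_eq_powr) (rule L)
  then show ?thesis unfolding tn_dens_def by (simp add: indicator_def)
qed

definition ix :: "(real^'n::finite) \<Rightarrow> 'n" where "ix = inv (\<lambda>i. axis i (1::real))"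

lemma inj_axis1: "inj (\<lambda>i::'n::finite. axis i (1::real))"
  by (auto simp: inj_def axis_eq_axis)

lemma ix_axis[simp]: "ix (axis i 1) = i"
  unfolding ix_def by (metis inj_axis1 inv_f_f)

lemma Basis_vec_eq: "(Basis :: (real^'n) set) = range (\<lambda>i. axis i 1)"
  by (auto simp: Basis_vec_def)

lemma comp_sum:
  fixes f :: "(real^'n) \<Rightarrow> real"
  assumes b: "b \<in> Basis"
  shows "(\<Sum>c\<in>Basis. f c *\<^sub>R c) \<bullet> b = f b"
  using b by (simp add: inner_sum_left inner_Basis if_distrib sum.delta cong: if_cong)

lemma reduce:
  fixes L :: "'n::finite \<Rightarrow> real" and \<phi> :: "real \<Rightarrow> real" and n :: 'n
  assumes L: "\<And>m. 0 < L m" and [measurable]: "\<phi> \<in> borel_measurable borel" and nn: "\<And>y. 0 \<le> \<phi> y"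
  shows "(\<integral>\<^sup>+x. ennreal (\<phi> (x$n) * tn_dens \<rho> L x) \<partial>lborel)
       = (\<integral>\<^sup>+y. ennreal (\<phi> y * nd (L n) y) * GI (\<lambda>b. L (ix b)) (Basis - {axis n 1}) (\<rho> - y\<^sup>2) \<partial>lborel)"
proof -
  define e :: "real^'n" where "e = axis n 1"
  define W where "W b = L (ix b)" for b :: "real^'n"
  have eB: "e \<in> Basis" unfolding e_def Basis_vec_eq by simp
  have F: "(\<lambda>x::real^'n. ennreal (\<phi> (x$n) * tn_dens \<rho> L x)) = (\<lambda>x. ennreal (\<phi> (x$n) * (indicator {..<\<rho>} (x \<bullet> x) * (\<Prod>m\<in>UNIV. nd (L m) (x $ m)))))"
  proof -
    have "tn_dens \<rho> L x = indicator {..<\<rho>} (x \<bullet> x) * (\<Prod>m\<in>UNIV. nd (L m) (x $ m))" for x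
      by (rule dens_eq) (rule L)
    then show ?thesis by simp
  qed
  have [measurable]: "(\<lambda>x::real^'n. x $ m) \<in> borel_measurable borel" for m
    unfolding cart_eq_inner_axis by measurable
  have "(\<integral>\<^sup>+x. ennreal (\<phi> (x$n) * tn_dens \<rho> L x) \<partial>lborel)
      = (\<integral>\<^sup>+x. ennreal (\<phi> (x$n) * (indicator {..<\<rho>} (x \<bullet> x) * (\<Prod>m\<in>UNIV. nd (L m) (x $ m)))) \<partial>(distr (\<Pi>\<^sub>M b\<in>Basis. lborel) borel (\<lambda>f. \<Sum>b\<in>Basis. f b *\<^sub>R b)))"
    unfolding F by (subst lborel_eq) simp
  also have "\<dots> = (\<integral>\<^sup>+f. ennreal (\<phi> ((\<Sum>b\<in>Basis. f b *\<^sub>R b :: real^'n)$n) * (indicator {..<\<rho>} ((\<Sum>b\<in>Basis. f b *\<^sub>R b :: real^'n) \<bullet> (\<Sum>b\<in>Basis. f b *\<^sub>R b))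
         * (\<Prod>m\<in>UNIV. nd (L m) ((\<Sum>b\<in>Basis. f b *\<^sub>R b :: real^'n) $ m)))) \<partial>(\<Pi>\<^sub>M b\<in>Basis. lborel))"
    by (subst nn_integral_distr) auto
  also have "\<dots> = (\<integral>\<^sup>+f. ennreal (\<phi> (f e) * indicator {..<\<rho>} (\<Sum>b\<in>insert e (Basis - {e}). (f b)\<^sup>2) * (\<Prod>b\<in>insert e (Basis - {e}). nd (W b) (f b))) \<partial>(\<Pi>\<^sub>M b\<in>insert e (Basis - {e}). lborel))"
  proof -
    have ins: "insert e (Basis - {e}) = Basis" using eB by auto
    have eq: "ennreal (\<phi> ((\<Sum>b\<in>Basis. f b *\<^sub>R b :: real^'n)$n) * (indicator {..<\<rho>} ((\<Sum>b\<in>Basis. f b *\<^sub>R b :: real^'n) \<bullet> (\<Sum>b\<in>Basis. f b *\<^sub>R b))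
         * (\<Prod>m\<in>UNIV. nd (L m) ((\<Sum>b\<in>Basis. f b *\<^sub>R b :: real^'n) $ m))))
       = ennreal (\<phi> (f e) * indicator {..<\<rho>} (\<Sum>b\<in>Basis. (f b)\<^sup>2) * (\<Prod>b\<in>Basis. nd (W b) (f b)))" for f
    proof -
      define x :: "real^'n" where "x = (\<Sum>b\<in>Basis. f b *\<^sub>R b)"
      have xc: "x $ m = f (axis m 1)" for m
        unfolding x_def cart_eq_inner_axis by (rule comp_sum) (simp add: Basis_vec_eq)
      have xx: "x \<bullet> x = (\<Sum>b\<in>Basis. (f b)\<^sup>2)"
        unfolding euclidean_inner[of x x] using comp_sum[of _ f] by (simp add: x_def power2_eq_square)
      have pr: "(\<Prod>m\<in>UNIV. nd (L m) (f (axis m 1))) = (\<Prod>b\<in>Basis. nd (W b) (f b))"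
        unfolding Basis_vec_eq W_def by (subst prod.reindex[OF inj_axis1]) simp
      show ?thesis unfolding x_def[symmetric] xx xc pr e_def by (simp add: mult.assoc)
    qed
    show ?thesis unfolding eq ins by simp
  qed
  also have "\<dots> = (\<integral>\<^sup>+y. ennreal (\<phi> y * nd (W e) y) * GI W (Basis - {e}) (\<rho> - y\<^sup>2) \<partial>lborel)"
    by (rule GI_insert_gen) (auto simp: nn)
  finally show ?thesis unfolding W_def e_def by simp
qed




lemma nd_scale:
  assumes c: "0 < c"
  shows "sqrt c * nd c (sqrt c * s) = nd 1 s"
proof -
  have "(sqrt c * s)\<^sup>2 = c * s\<^sup>2" using c by (simp add: power_mult_distrib)
  then show ?thesis using c unfolding nd_alt[OF c] nd_alt[of 1, simplified]
    by (simp add: real_sqrt_mult field_simps)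
qed

lemma subst_nd:
  fixes h :: "real \<Rightarrow> real"
  assumes c: "0 < c" and [measurable]: "h \<in> borel_measurable borel" and nn: "\<And>y. 0 \<le> h y"
  shows "(\<integral>\<^sup>+y. ennreal (h y * nd c y) \<partial>lborel) = (\<integral>\<^sup>+s. ennreal (h (sqrt c * s) * nd 1 s) \<partial>lborel)"
proof -
  have sc: "sqrt c \<noteq> 0" using c by simp
  have "(\<integral>\<^sup>+y. ennreal (h y * nd c y) \<partial>lborel) = \<bar>sqrt c\<bar> * (\<integral>\<^sup>+s. ennreal (h (0 + sqrt c * s) * nd c (0 + sqrt c * s)) \<partial>lborel)"
    by (rule nn_integral_real_affine[OF _ sc]) measurable
  also have "\<dots> = (\<integral>\<^sup>+s. ennreal (sqrt c) * ennreal (h (sqrt c * s) * nd c (sqrt c * s)) \<partial>lborel)"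
    using c by (subst nn_integral_cmult) auto
  also have "\<dots> = (\<integral>\<^sup>+s. ennreal (h (sqrt c * s) * nd 1 s) \<partial>lborel)"
  proof (rule nn_integral_cong)
    fix s
    have "sqrt c * (h (sqrt c * s) * nd c (sqrt c * s)) = h (sqrt c * s) * (sqrt c * nd c (sqrt c * s))" by simp
    also have "\<dots> = h (sqrt c * s) * nd 1 s" using nd_scale[OF c] by simp
    finally show "ennreal (sqrt c) * ennreal (h (sqrt c * s) * nd c (sqrt c * s)) = ennreal (h (sqrt c * s) * nd 1 s)"
      using c nn by (simp flip: ennreal_mult)
  qed
  finally show ?thesis .
qed

lemma ratio:
  fixes G :: "real \<Rightarrow> real" and a b \<rho> :: real
  assumes lc: "lc G" and mono: "mono G" and nn: "\<And>x. 0 \<le> G x" and le1: "\<And>x. G x \<le> 1"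
    and Gm[measurable]: "G \<in> borel_measurable borel"
    and ab: "0 \<le> a" "a \<le> b"
  defines "N1 c \<equiv> enn2real (\<integral>\<^sup>+s. ennreal (s\<^sup>2 * nd 1 s * G (\<rho> - c * s\<^sup>2)) \<partial>lborel)"
    and "D1 c \<equiv> enn2real (\<integral>\<^sup>+s. ennreal (nd 1 s * G (\<rho> - c * s\<^sup>2)) \<partial>lborel)"
  shows "N1 b / D1 b \<le> N1 a / D1 a"
proof -
  have fin: "(\<integral>\<^sup>+s. ennreal (s\<^sup>2 * nd 1 s * G (\<rho> - c * s\<^sup>2)) \<partial>lborel) < top"
       "(\<integral>\<^sup>+s. ennreal (nd 1 s * G (\<rho> - c * s\<^sup>2)) \<partial>lborel) < top" for c
  proof -
    have "(\<integral>\<^sup>+s. ennreal (s\<^sup>2 * nd 1 s * G (\<rho> - c * s\<^sup>2)) \<partial>lborel) \<le> (\<integral>\<^sup>+s. ennreal (nd 1 s * s^2) \<partial>lborel)"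
      using nn le1 by (intro nn_integral_mono ennreal_leI) (simp add: mult_left_le mult.commute mult.left_commute)
    also have "\<dots> = ennreal (\<integral>s. nd 1 s * s^2 \<partial>lborel)"
    proof (rule nn_integral_eq_integral)
      show "integrable lborel (\<lambda>s. nd 1 s * s^2)" unfolding nd_def
        using integrable_std_normal_moment[of 2] by simp
    qed auto
    also have "\<dots> < top" by simp
    finally show "(\<integral>\<^sup>+s. ennreal (s\<^sup>2 * nd 1 s * G (\<rho> - c * s\<^sup>2)) \<partial>lborel) < top" .
    have "(\<integral>\<^sup>+s. ennreal (nd 1 s * G (\<rho> - c * s\<^sup>2)) \<partial>lborel) \<le> (\<integral>\<^sup>+s. ennreal (nd 1 s) \<partial>lborel)"
      using nn le1 by (intro nn_integral_mono ennreal_leI) (simp add: mult_left_le)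
    also have "\<dots> = 1" by (simp add: nd_nn_integral)
    finally show "(\<integral>\<^sup>+s. ennreal (nd 1 s * G (\<rho> - c * s\<^sup>2)) \<partial>lborel) < top" by (simp add: le_less_trans)
  qed
  have Neq: "(\<integral>\<^sup>+s. ennreal (s\<^sup>2 * nd 1 s * G (\<rho> - c * s\<^sup>2)) \<partial>lborel) = ennreal (N1 c)" for c
    unfolding N1_def using fin(1)[of c] by (simp add: less_top)
  have Deq: "(\<integral>\<^sup>+s. ennreal (nd 1 s * G (\<rho> - c * s\<^sup>2)) \<partial>lborel) = ennreal (D1 c)" for c
    unfolding D1_def using fin(2)[of c] by (simp add: less_top)
  have N0: "0 \<le> N1 c" "0 \<le> D1 c" for c unfolding N1_def D1_def by simp_all
  have "ennreal (N1 b) * ennreal (D1 a) \<le> ennreal (N1 a) * ennreal (D1 b)"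
    using tp2_int[OF lc mono nn Gm ab, of \<rho>] unfolding Neq Deq .
  then have cross: "N1 b * D1 a \<le> N1 a * D1 b" using N0 by (simp add: ennreal_mult'[symmetric] del: ennreal_mult')
  have Dmono: "D1 b \<le> D1 a"
  proof -
    have "(\<integral>\<^sup>+s. ennreal (nd 1 s * G (\<rho> - b * s\<^sup>2)) \<partial>lborel) \<le> (\<integral>\<^sup>+s. ennreal (nd 1 s * G (\<rho> - a * s\<^sup>2)) \<partial>lborel)"
    proof (intro nn_integral_mono ennreal_leI mult_left_mono)
      fix s :: real
      have "\<rho> - b * s\<^sup>2 \<le> \<rho> - a * s\<^sup>2" using ab by (intro diff_left_mono mult_right_mono) auto
      then show "G (\<rho> - b * s\<^sup>2) \<le> G (\<rho> - a * s\<^sup>2)" using mono by (simp add: monoD)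
    qed simp
    then show ?thesis unfolding Deq using N0 by simp
  qed
  show ?thesis
  proof (cases "D1 b = 0")
    case True then show ?thesis using N0 by simp
  next
    case False
    then have db: "0 < D1 b" using N0 by (simp add: less_le)
    then have da: "0 < D1 a" using Dmono by simp
    show ?thesis using cross db da by (simp add: frac_le_eq divide_le_0_iff field_simps mult.commute)
  qed
qed




lemma dens_meas:
  fixes L :: "'n::finite \<Rightarrow> real"
  assumes L: "\<And>m. 0 < L m"
  shows "tn_dens \<rho> L \<in> borel_measurable borel"
proof -
  have [measurable]: "(\<lambda>x::real^'n. x $ m) \<in> borel_measurable borel" for m
    unfolding cart_eq_inner_axis by measurable
  have "tn_dens \<rho> L = (\<lambda>x. indicator {..<\<rho>} (x \<bullet> x) * (\<Prod>m\<in>UNIV. nd (L m) (x $ m)))"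
    by (rule ext, rule dens_eq) (rule L)
  moreover have "(\<lambda>x::real^'n. indicator {..<\<rho>} (x \<bullet> x) * (\<Prod>m\<in>UNIV. nd (L m) (x $ m))) \<in> borel_measurable borel"
    by measurable
  ultimately show ?thesis by simp
qed

lemma dens_nonneg: "(\<And>m. 0 < L m) \<Longrightarrow> 0 \<le> tn_dens \<rho> L x"
  unfolding tn_dens_def by (auto intro!: prod_nonneg)

lemma expect_eq:
  fixes L :: "'n::finite \<Rightarrow> real"
  assumes L: "\<And>m. 0 < L m"
  shows "tn_expect \<rho> L n = enn2real (\<integral>\<^sup>+x. ennreal ((x$n)\<^sup>2 * tn_dens \<rho> L x) \<partial>lborel)
              / (L n * enn2real (\<integral>\<^sup>+x. ennreal (tn_dens \<rho> L x) \<partial>lborel))"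
proof -
  note [measurable] = dens_meas[OF L]
  have [measurable]: "(\<lambda>x::real^'n. x $ m) \<in> borel_measurable borel" for m
    unfolding cart_eq_inner_axis by measurable
  define Dr where "Dr = (\<integral>x. tn_dens \<rho> L x \<partial>lborel)"
  have "tn_expect \<rho> L n = (\<integral>x. (1 / (L n * Dr)) * ((x$n)\<^sup>2 * tn_dens \<rho> L x) \<partial>lborel)"
    unfolding tn_expect_def tn_pdf_def tn_const_def Dr_def[symmetric]
    by (intro Bochner_Integration.integral_cong refl) (simp add: divide_inverse inverse_mult_distrib mult_ac)
  also have "\<dots> = (1 / (L n * Dr)) * (\<integral>x. (x$n)\<^sup>2 * tn_dens \<rho> L x \<partial>lborel)"
    by (rule integral_mult_right_zero)
  also have "(\<integral>x. (x$n)\<^sup>2 * tn_dens \<rho> L x \<partial>lborel) = enn2real (\<integral>\<^sup>+x. ennreal ((x$n)\<^sup>2 * tn_dens \<rho> L x) \<partial>lborel)"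
    by (rule integral_eq_nn_integral) (auto simp: dens_nonneg[OF L])
  also have "Dr = enn2real (\<integral>\<^sup>+x. ennreal (tn_dens \<rho> L x) \<partial>lborel)"
    unfolding Dr_def by (rule integral_eq_nn_integral) (auto simp: dens_nonneg[OF L])
  finally show ?thesis by (simp only: divide_inverse mult_1 mult.commute)
qed

lemma GI_cong:
  assumes "\<And>i. i \<in> I \<Longrightarrow> w i = w' i"
  shows "GI w I t = GI w' I t"
proof -
  have "(\<Prod>i\<in>I. nd (w i) (\<omega> i)) = (\<Prod>i\<in>I. nd (w' i) (\<omega> i))" for \<omega> :: "'a \<Rightarrow> real"
    by (rule prod.cong) (auto simp: assms)
  then show ?thesis unfolding GI_def by simp
qed


theorem mainTheorem4:
  fixes \<rho> :: real and n :: "'n::finite" and lam :: "'n \<Rightarrow> real"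
  assumes "\<rho> > 0"
    and "\<forall>m. m \<noteq> n \<longrightarrow> lam m > 0"
  shows "\<forall>a b. 0 < a \<longrightarrow> a \<le> b \<longrightarrow>
           tn_expect \<rho> (lam(n := b)) n \<le> tn_expect \<rho> (lam(n := a)) n"
proof (intro allI impI)
  fix a b :: real assume a: "0 < a" and ab: "a \<le> b"
  have lampos: "m \<noteq> n \<Longrightarrow> 0 < lam m" for m using assms(2) by auto
  define I' :: "(real^'n) set" where "I' = Basis - {axis n 1}"
  define W0 where "W0 b = lam (ix b)" for b :: "real^'n"
  have finI: "finite I'" unfolding I'_def by simp
  have ixI: "ix b \<noteq> n" if "b \<in> I'" for b
  proof -
    from that obtain m where m: "b = axis m 1" "b \<noteq> axis n 1" unfolding I'_def Basis_vec_eq by auto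
    then have "m \<noteq> n" by auto
    then show ?thesis using m by simp
  qed
  have W0pos: "0 < W0 i" if "i \<in> I'" for i unfolding W0_def using ixI[OF that] lampos by simp
  define G where "G = Gr W0 I'"
  have Glc: "lc G" unfolding G_def using lc_Gr[of I' W0] finI W0pos by blast
  have Gmono: "mono G" unfolding G_def mono_def using Gr_mono[of I' W0] finI W0pos by blast
  have Gnn: "0 \<le> G x" for x unfolding G_def by (rule Gr_nonneg)
  have Gle1: "G x \<le> 1" for x unfolding G_def using Gr_le1[of I' W0] finI W0pos by blast
  have Gm[measurable]: "G \<in> borel_measurable borel" unfolding G_def using Gr_meas[of I' W0] finI W0pos by blast
  have GIeq: "GI W0 I' t = ennreal (G t)" for t unfolding G_def using GI_eq[of I' W0] finI W0pos by blast
  define N1 where "N1 c = enn2real (\<integral>\<^sup>+s. ennreal (s\<^sup>2 * nd 1 s * G (\<rho> - c * s\<^sup>2)) \<partial>lborel)" for c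
  define D1 where "D1 c = enn2real (\<integral>\<^sup>+s. ennreal (nd 1 s * G (\<rho> - c * s\<^sup>2)) \<partial>lborel)" for c
  have E: "tn_expect \<rho> (lam(n := c)) n = N1 c / D1 c" if c: "0 < c" for c
  proof -
    define L where "L = lam(n := c)"
    have Lpos: "0 < L m" for m unfolding L_def using c lampos by auto
    have GIL: "GI (\<lambda>b. L (ix b)) I' t = ennreal (G t)" for t
    proof -
      have "GI (\<lambda>b. L (ix b)) I' t = GI W0 I' t"
        by (rule GI_cong) (auto simp: L_def W0_def ixI)
      then show ?thesis using GIeq by simp
    qed
    have Dred: "(\<integral>\<^sup>+x. ennreal (tn_dens \<rho> L x) \<partial>lborel) = (\<integral>\<^sup>+s. ennreal (nd 1 s * G (\<rho> - c * s\<^sup>2)) \<partial>lborel)"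
    proof -
      have "(\<integral>\<^sup>+x. ennreal (tn_dens \<rho> L x) \<partial>lborel) = (\<integral>\<^sup>+x. ennreal ((\<lambda>_. 1) (x$n) * tn_dens \<rho> L x) \<partial>lborel)"
        by simp
      also have "\<dots> = (\<integral>\<^sup>+y. ennreal (1 * nd (L n) y) * GI (\<lambda>b. L (ix b)) (Basis - {axis n 1}) (\<rho> - y\<^sup>2) \<partial>lborel)"
        by (rule reduce) (auto intro: Lpos)
      also have "\<dots> = (\<integral>\<^sup>+y. ennreal (G (\<rho> - y\<^sup>2) * nd c y) \<partial>lborel)"
        using GIL unfolding I'_def by (intro nn_integral_cong) (simp add: L_def Gnn ennreal_mult' mult.commute)
      also have "\<dots> = (\<integral>\<^sup>+s. ennreal (G (\<rho> - (sqrt c * s)\<^sup>2) * nd 1 s) \<partial>lborel)"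
        by (rule subst_nd[OF c]) (auto simp: Gnn)
      also have "\<dots> = (\<integral>\<^sup>+s. ennreal (nd 1 s * G (\<rho> - c * s\<^sup>2)) \<partial>lborel)"
        using c by (intro nn_integral_cong) (simp add: power_mult_distrib mult.commute)
      finally show ?thesis .
    qed
    have Nred: "(\<integral>\<^sup>+x. ennreal ((x$n)\<^sup>2 * tn_dens \<rho> L x) \<partial>lborel) = ennreal c * (\<integral>\<^sup>+s. ennreal (s\<^sup>2 * nd 1 s * G (\<rho> - c * s\<^sup>2)) \<partial>lborel)"
    proof -
      have "(\<integral>\<^sup>+x. ennreal ((x$n)\<^sup>2 * tn_dens \<rho> L x) \<partial>lborel) = (\<integral>\<^sup>+y. ennreal (y\<^sup>2 * nd (L n) y) * GI (\<lambda>b. L (ix b)) (Basis - {axis n 1}) (\<rho> - y\<^sup>2) \<partial>lborel)"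
        by (rule reduce) (auto intro: Lpos)
      also have "\<dots> = (\<integral>\<^sup>+y. ennreal ((y\<^sup>2 * G (\<rho> - y\<^sup>2)) * nd c y) \<partial>lborel)"
        using GIL unfolding I'_def by (intro nn_integral_cong) (simp add: L_def Gnn ennreal_mult' mult_ac)
      also have "\<dots> = (\<integral>\<^sup>+s. ennreal (((sqrt c * s)\<^sup>2 * G (\<rho> - (sqrt c * s)\<^sup>2)) * nd 1 s) \<partial>lborel)"
        by (rule subst_nd[OF c]) (auto simp: Gnn)
      also have "\<dots> = (\<integral>\<^sup>+s. ennreal c * ennreal (s\<^sup>2 * nd 1 s * G (\<rho> - c * s\<^sup>2)) \<partial>lborel)"
        using c by (intro nn_integral_cong) (simp add: power_mult_distrib Gnn mult_ac flip: ennreal_mult)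
      also have "\<dots> = ennreal c * (\<integral>\<^sup>+s. ennreal (s\<^sup>2 * nd 1 s * G (\<rho> - c * s\<^sup>2)) \<partial>lborel)"
        by (rule nn_integral_cmult) simp
      finally show ?thesis .
    qed
    have "tn_expect \<rho> L n = enn2real (\<integral>\<^sup>+x. ennreal ((x$n)\<^sup>2 * tn_dens \<rho> L x) \<partial>lborel)
              / (L n * enn2real (\<integral>\<^sup>+x. ennreal (tn_dens \<rho> L x) \<partial>lborel))"
      by (rule expect_eq) (rule Lpos)
    also have "\<dots> = (c * N1 c) / (c * D1 c)"
      unfolding Nred Dred N1_def D1_def using c by (simp add: L_def enn2real_mult)
    also have "\<dots> = N1 c / D1 c" using c by simp
    finally show ?thesis unfolding L_def .
  qed
  have "N1 b / D1 b \<le> N1 a / D1 a"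
    unfolding N1_def D1_def by (rule ratio[OF Glc Gmono Gnn Gle1 Gm]) (use a ab in auto)
  then show "tn_expect \<rho> (lam(n := b)) n \<le> tn_expect \<rho> (lam(n := a)) n"
    using E[OF a] E[of b] a ab by simp
qed



end
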